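(* Let $f\in K$ and suppose that for every strictly increasing sequence $\mathbf a$ of positive integers, $f$ has finite order with respect to $A_{\mathbf a}$ (i.e. $A_{\mathbf a}^d f=f$ for some $d\ge1$). Then there exists a strictly increasing sequence $\mathbf b$ of positive integers such that $A_{\mathbf b}f$ is quasi-symmetric.
   Context: $K$ is the ring of integer formal power series of bounded degree in $x_1,x_2,\dots$; $f\in K$ is quasi-symmetric if the coefficient of $x_{i_1}^{a_1}\cdots x_{i_k}^{a_k}$ equals that of $x_{j_1}^{a_1}\cdots x_{j_k}^{a_k}$ whenever $i_1<\dots<i_k$, $j_1<\dots<j_k$. For a strictly increasing sequence $\mathbf a=(1\le a_1<a_2<\cdots)$, $A_{\mathbf a}:K\to K$ is the algebra homomorphism substituting $x_{a_i}\mapsto x_i$ for all $i$ and every variable not of the form $x_{a_i}$ by $0$. *)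

theory Defs
  imports Main
begin

text \<open>Variables are indexed from 0 (x_0, x_1, ... stands for the paper's x_1, x_2, ...).
  A monomial is an exponent vector; a series assigns an integer coefficient to each monomial.\<close>

type_synonym mon = "nat \<Rightarrow> nat"
type_synonym ser = "mon \<Rightarrow> int"

definition supp :: "mon \<Rightarrow> nat set" where
  "supp m = {i. m i \<noteq> 0}"

definition deg :: "mon \<Rightarrow> nat" where
  "deg m = (\<Sum>i\<in>supp m. m i)"

text \<open>The ring K: integer formal power series of bounded degree (only genuine monomials,
  i.e. finitely supported exponent vectors, carry nonzero coefficients).\<close>
definition inK :: "ser \<Rightarrow> bool" where
  "inK f \<longleftrightarrow> (\<exists>D. \<forall>m. f m \<noteq> 0 \<longrightarrow> finite (supp m) \<and> deg m \<le> D)"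

text \<open>The substitution homomorphism A_a (a strictly increasing): x_{a i} \<mapsto> x_i, all other
  variables \<mapsto> 0. Coefficientwise: the coefficient of m in A_a f is the coefficient in f of the
  unique monomial supported on range a that is sent to m.\<close>
definition A :: "(nat \<Rightarrow> nat) \<Rightarrow> ser \<Rightarrow> ser" where
  "A a f = (\<lambda>m. f (\<lambda>j. if j \<in> range a then m (inv a j) else 0))"

definition exps :: "mon \<Rightarrow> nat list" where
  "exps m = map m (sorted_list_of_set (supp m))"

definition qsym :: "ser \<Rightarrow> bool" where
  "qsym f \<longleftrightarrow> (\<forall>m m'. finite (supp m) \<and> finite (supp m') \<and> exps m = exps m' \<longrightarrow> f m = f m')"

end

theory Submission
  imports Defs
begin

definition push :: "(nat \<Rightarrow> nat) \<Rightarrow> mon \<Rightarrow> mon" where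
  "push a m = (\<lambda>j. if j \<in> range a then m (inv a j) else 0)"

lemma A_push: "A a f m = f (push a m)"
  by (simp add: A_def push_def)

lemma push_at: "inj a \<Longrightarrow> push a m (a i) = m i"
  by (simp add: push_def)

lemma push_out: "j \<notin> range a \<Longrightarrow> push a m j = 0"
  by (simp add: push_def)

lemma push_comp:
  assumes "inj a" "inj b"
  shows "push b (push a m) = push (b \<circ> a) m"
proof
  fix j
  have ib: "inj (b \<circ> a)" using assms by (simp add: inj_compose)
  show "push b (push a m) j = push (b \<circ> a) m j"
  proof (cases "j \<in> range b")
    case True
    then obtain i where j: "j = b i" by auto
    show ?thesis
    proof (cases "i \<in> range a")
      case True
      then obtain l where "i = a l" by auto
      then show ?thesis using j assms ib push_at[OF ib, of m l]
        by (simp add: push_at)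
    next
      case False
      have "j \<notin> range (b \<circ> a)" using False j assms(2) by (auto dest: injD)
      then show ?thesis using j False assms by (simp add: push_at push_out)
    qed
  next
    case False
    then have "j \<notin> range (b \<circ> a)" by auto
    then show ?thesis using False by (simp add: push_out)
  qed
qed

lemma push_id: "push id m = m"
  by (simp add: push_def)

lemma push_id': "push (\<lambda>x. x) m = m"
  by (simp add: push_def)

lemma A_pow: "inj a \<Longrightarrow> (A a ^^ d) f = A (a ^^ d) f"
proof (induction d)
  case 0
  then show ?case by (simp add: fun_eq_iff A_push push_id')
next
  case (Suc d)
  have "(A a ^^ Suc d) f = A a (A (a ^^ d) f)" using Suc by simp
  also have "\<dots> = A (a ^^ d \<circ> a) f"
    using Suc.prems by (simp add: fun_eq_iff A_push push_comp)
  also have "a ^^ d \<circ> a = a ^^ Suc d" by (simp only: funpow_Suc_right)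
  finally show ?case .
qed

lemma push_zero:
  assumes "inj a" "supp m \<subseteq> {..<K}" "j \<notin> a ` {..<K}"
  shows "push a m j = 0"
proof (cases "j \<in> range a")
  case True
  then obtain i where j: "j = a i" by auto
  then have "i \<notin> {..<K}" using assms(3) by auto
  then have "m i = 0" using assms(2) by (auto simp: supp_def)
  then show ?thesis using j assms(1) by (simp add: push_at)
qed (simp add: push_out)

lemma push_agree:
  assumes "inj a" "inj b" "supp m \<subseteq> {..<K}" "\<forall>i<K. a i = b i"
  shows "push a m = push b m"
proof
  fix j
  show "push a m j = push b m j"
  proof (cases "j \<in> a ` {..<K}")
    case True
    then obtain i where "i < K" "j = a i" by auto
    then show ?thesis using assms push_at[of a m i] push_at[of b m i] by simp
  next
    case False
    have "a ` {..<K} = b ` {..<K}" using assms(4) by auto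
    then show ?thesis using False assms push_zero by metis
  qed
qed


definition good :: "nat \<Rightarrow> (nat \<Rightarrow> nat) \<Rightarrow> bool" where
  "good N a \<longleftrightarrow> strict_mono a \<and> N \<le> a 0 \<and> (\<forall>i. a i + N \<le> a (Suc i))"

lemma good_gap:
  assumes "good N a" "i' < i"
  shows "a i' + N \<le> a i"
proof -
  have "a i' + N \<le> a (Suc i')" using assms(1) by (simp add: good_def)
  also have "\<dots> \<le> a i" using assms by (simp add: good_def strict_mono_less_eq)
  finally show ?thesis .
qed

lemma invariant_far:
  assumes hyp: "\<forall>a. strict_mono a \<longrightarrow> (\<exists>d\<ge>1. (A a ^^ d) f = f)"
    and suppm: "supp m \<subseteq> {..<K}"
  shows "\<exists>N. \<forall>a. good N a \<longrightarrow> f (push a m) = f m"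
proof (rule ccontr)
  assume "\<not> ?thesis"
  then have bad: "\<forall>N. \<exists>a. good N a \<and> f (push a m) \<noteq> f m" by auto
  define pick where "pick N = (SOME a. good N a \<and> f (push a m) \<noteq> f m)" for N
  have pick: "good N (pick N) \<and> f (push (pick N) m) \<noteq> f m" for N
    unfolding pick_def by (rule someI_ex[OF spec[OF bad, of N]])
  define T where "T = rec_nat id (\<lambda>_ Td. pick (2 * Td K + 1))"
  have T0: "T 0 = id" by (simp add: T_def)
  have TS: "T (Suc d) = pick (2 * T d K + 1)" for d by (simp add: T_def)
  have sm: "strict_mono (T d)" for d
  proof (cases d)
    case (Suc e) then show ?thesis using pick[of "2 * T e K + 1"] TS[of e] by (simp add: good_def)
  qed (simp add: T0 strict_mono_def)
  have goodS: "good (2 * T d K + 1) (T (Suc d))" for d using pick TS by simp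
  have badS: "f (push (T (Suc d)) m) \<noteq> f m" for d using pick TS by simp
  have startS: "2 * T d K + 1 \<le> T (Suc d) 0" for d using goodS[of d] by (simp add: good_def)
  have le_i: "i \<le> j \<Longrightarrow> T d i \<le> T d j" for d i j using sm by (simp add: strict_mono_less_eq)
  have lt_i: "i < j \<Longrightarrow> T d i < T d j" for d i j using sm by (simp add: strict_mono_less)
  have F1: "d' < d \<Longrightarrow> T d' K < T d 0" for d' d
  proof (induction d)
    case 0 then show ?case by simp
  next
    case (Suc e)
    have "T d' K \<le> T e K"
    proof (cases "d' = e")
      case False
      then have "T d' K < T e 0" using Suc by simp
      then show ?thesis using le_i[of 0 K e] by simp
    qed simp
    then show ?case using startS[of e] by simp
  qed
  have Tge: "d \<le> T d i" for d i
  proof (induction d arbitrary: i)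
    case (Suc d)
    have "d \<le> T d K" using Suc by blast
    then show ?case using startS[of d] le_i[of 0 i "Suc d"] by simp
  qed simp
  have TleS: "i < K \<Longrightarrow> T d i \<le> T (Suc d) i" for d i
    using startS[of d] le_i[of 0 i "Suc d"] le_i[of i K d] by simp
  have key: "D' \<le> T (Suc d) i - T d i"
    if "i < K" "i' < K" "T d' i' \<le> T d i" "D' = T (Suc d') i' - T d' i'" for d i d' i' D'
  proof -
    consider "d < d'" | "d' = d" | "d' < d" by linarith
    then show ?thesis
    proof cases
      case 1
      then have "T d K < T d' 0" using F1 by simp
      moreover have "T d i < T d K" using lt_i that(1) by simp
      moreover have "T d' 0 \<le> T d' i'" using le_i by simp
      ultimately show ?thesis using that(3) by simp
    next
      case 2
      then have "i' \<le> i" using that(3) lt_i[of i i' d] by (cases "i < i'") auto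
      show ?thesis
      proof (cases "i' = i")
        case True then show ?thesis using 2 that by simp
      next
        case False
        then have "i' < i" using \<open>i' \<le> i\<close> by simp
        then have "T (Suc d) i' + (2 * T d K + 1) \<le> T (Suc d) i" using good_gap goodS by blast
        moreover have "T d i \<le> T d K" using le_i that(1) by simp
        ultimately show ?thesis using that(4) 2 by simp
      qed
    next
      case 3
      have a: "T (Suc d') K \<le> T d K"
      proof (cases "Suc d' = d")
        case False
        then have "T (Suc d') K < T d 0" using F1 3 by simp
        then show ?thesis using le_i[of 0 K d] by simp
      qed simp
      have "T (Suc d') i' \<le> T (Suc d') K" using le_i that(2) by simp
      moreover have "T d i \<le> T d K" using le_i that(1) by simp
      moreover have "T (Suc d) 0 \<le> T (Suc d) i" using le_i by simp
      ultimately show ?thesis using a startS[of d] that(4) by simp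
    qed
  qed
  define S where "S x = {T (Suc d) i - T d i | d i. i < K \<and> T d i \<le> x}" for x
  have finS: "finite (S x)" for x
  proof -
    have "S x \<subseteq> (\<lambda>(d, i). T (Suc d) i - T d i) ` ({..x} \<times> {..<K})"
    proof
      fix y assume "y \<in> S x"
      then obtain d i where y: "y = T (Suc d) i - T d i" "i < K" "T d i \<le> x"
        unfolding S_def by blast
      then have "d \<le> x" using Tge[of d i] by linarith
      then show "y \<in> (\<lambda>(d, i). T (Suc d) i - T d i) ` ({..x} \<times> {..<K})"
        using y by force
    qed
    then show ?thesis by (rule finite_subset) simp
  qed
  define \<sigma> where "\<sigma> x = x + Max (insert 0 (S x))" for x
  have smono: "strict_mono \<sigma>"
  proof (rule strict_monoI)
    fix x y :: nat assume "x < y"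
    then have "S x \<subseteq> S y" unfolding S_def by force
    then have "Max (insert 0 (S x)) \<le> Max (insert 0 (S y))"
      using finS by (intro Max_mono) auto
    then show "\<sigma> x < \<sigma> y" using \<open>x < y\<close> unfolding \<sigma>_def by simp
  qed
  have \<sigma>T: "\<sigma> (T d i) = T (Suc d) i" if "i < K" for d i
  proof -
    have "Max (insert 0 (S (T d i))) = T (Suc d) i - T d i"
    proof (rule Max_eqI)
      show "finite (insert 0 (S (T d i)))" using finS by simp
      show "T (Suc d) i - T d i \<in> insert 0 (S (T d i))" unfolding S_def using that by blast
      fix y assume "y \<in> insert 0 (S (T d i))"
      then show "y \<le> T (Suc d) i - T d i"
      proof
        assume "y \<in> S (T d i)"
        then obtain d' i' where "y = T (Suc d') i' - T d' i'" "i' < K" "T d' i' \<le> T d i"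
          unfolding S_def by blast
        then show ?thesis using key[OF that] by blast
      qed simp
    qed
    then show ?thesis unfolding \<sigma>_def using TleS[OF that] by simp
  qed
  have \<sigma>pow: "(\<sigma> ^^ d) i = T d i" if "i < K" for d i
    using that by (induction d) (auto simp: T0 \<sigma>T)
  obtain d where d: "d \<ge> 1" "(A \<sigma> ^^ d) f = f" using hyp smono by blast
  have inj\<sigma>: "inj \<sigma>" using smono strict_mono_imp_inj_on by blast
  have "A (\<sigma> ^^ d) f m = f m" using d A_pow[OF inj\<sigma>] by metis
  then have eq: "f (push (\<sigma> ^^ d) m) = f m" by (simp add: A_push)
  have "push (\<sigma> ^^ d) m = push (T d) m"
    using push_agree[OF inj_fn[OF inj\<sigma>] strict_mono_imp_inj_on[OF sm] suppm] \<sigma>pow by blast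
  moreover obtain d0 where "d = Suc d0" using d(1) by (cases d) auto
  ultimately show False using eq badS by metis
qed


definition comp :: "nat list \<Rightarrow> mon" where
  "comp xs = (\<lambda>i. if i < length xs then xs ! i else 0)"

lemma supp_comp: "supp (comp xs) \<subseteq> {..<length xs}"
  by (auto simp: supp_def comp_def split: if_splits)

lemma decomp:
  assumes fin: "finite (supp m)"
  shows "\<exists>e. strict_mono e \<and> m = push e (comp (exps m))"
proof -
  define L where "L = sorted_list_of_set (supp m)"
  define n where "n = length L"
  define e where "e i = (if i < n then L ! i else Max (supp m) + 1 + i)" for i
  have sL: "sorted_wrt (<) L" unfolding L_def by (rule strict_sorted_list_of_set)
  have setL: "set L = supp m" unfolding L_def using fin by simp
  have inS: "i < n \<Longrightarrow> L ! i \<in> supp m" for i using setL n_def nth_mem by blast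
  have leMax: "x \<in> supp m \<Longrightarrow> x \<le> Max (supp m)" for x using fin by simp
  have sm: "strict_mono e"
  proof (rule strict_monoI)
    fix i j :: nat assume ij: "i < j"
    show "e i < e j"
    proof (cases "j < n")
      case True
      then show ?thesis using ij sorted_wrt_nth_less[OF sL ij] n_def e_def by simp
    next
      case False
      then show ?thesis using ij inS[of i] leMax[of "L ! i"] e_def by auto
    qed
  qed
  have inj: "inj e" using sm strict_mono_imp_inj_on by blast
  have "m j = push e (comp (exps m)) j" for j
  proof (cases "j \<in> range e")
    case True
    then obtain i where j: "j = e i" by auto
    have "push e (comp (exps m)) j = comp (exps m) i" using j inj by (simp add: push_at)
    also have "\<dots> = m j"
    proof (cases "i < n")
      case True
      then show ?thesis using j by (simp add: comp_def exps_def L_def[symmetric] n_def e_def)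
    next
      case False
      then have "j \<notin> supp m" using j leMax[of j] e_def by auto
      then have "m j = 0" by (simp add: supp_def)
      moreover have "length (exps m) = n" by (simp add: exps_def L_def n_def)
      ultimately show ?thesis using False by (simp add: comp_def)
    qed
    finally show ?thesis by simp
  next
    case False
    have "j \<notin> supp m"
    proof
      assume "j \<in> supp m"
      then obtain i where "i < n" "L ! i = j" using setL n_def by (metis in_set_conv_nth)
      then have "e i = j" using e_def by simp
      then show False using False by auto
    qed
    then show ?thesis using False by (simp add: push_out supp_def)
  qed
  then show ?thesis using sm by blast
qed

lemma eq_comp:
  assumes hyp: "\<forall>a. strict_mono a \<longrightarrow> (\<exists>d\<ge>1. (A a ^^ d) f = f)"
    and fin: "finite (supp m)"
  shows "f m = f (comp (exps m))"
proof -
  define c where "c = comp (exps m)"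
  obtain e where e: "strict_mono e" "m = push e c" using decomp[OF fin] c_def by blast
  obtain K where K: "supp m \<subseteq> {..<K}" 
  proof
    show "supp m \<subseteq> {..<Suc (Max (supp m))}" using fin by (auto simp: le_imp_less_Suc)
  qed
  obtain N1 where N1: "\<forall>a. good N1 a \<longrightarrow> f (push a c) = f c"
    using invariant_far[OF hyp supp_comp] c_def by blast
  obtain N2 where N2: "\<forall>a. good N2 a \<longrightarrow> f (push a m) = f m"
    using invariant_far[OF hyp K] by blast
  define M where "M = N1 + N2 + 1"
  define a where "a i = M * Suc i" for i
  have sma: "strict_mono a" unfolding a_def M_def by (rule strict_monoI) (simp add: add_less_le_mono)
  have aS: "a (Suc i) = a i + M" for i by (simp add: a_def)
  have "good N2 a" unfolding good_def using sma aS by (simp add: a_def M_def)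
  then have 1: "f (push a m) = f m" using N2 by blast
  have inja: "inj a" and inje: "inj e" using sma e(1) strict_mono_imp_inj_on by blast+
  have 2: "push a m = push (a \<circ> e) c" using e(2) push_comp[OF inje inja] by simp
  have "good N1 (a \<circ> e)"
    unfolding good_def
  proof (intro conjI allI)
    show "strict_mono (a \<circ> e)" using sma e(1) by (simp add: strict_mono_def)
    show "N1 \<le> (a \<circ> e) 0" by (simp add: a_def M_def)
    fix i
    have "Suc (e i) \<le> e (Suc i)" using e(1) by (simp add: strict_mono_def Suc_leI)
    then have "a (Suc (e i)) \<le> a (e (Suc i))" using sma by (simp add: strict_mono_less_eq)
    then show "(a \<circ> e) i + N1 \<le> (a \<circ> e) (Suc i)" using aS[of "e i"] by (simp add: M_def)
  qed
  then have "f (push (a \<circ> e) c) = f c" using N1 by blast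
  then show ?thesis using 1 2 c_def by simp
qed

theorem lemma8p5:
  fixes f :: ser
  assumes "inK f"
    and "\<forall>a. strict_mono a \<longrightarrow> (\<exists>d\<ge>1. (A a ^^ d) f = f)"
  shows "\<exists>b. strict_mono b \<and> qsym (A b f)"
proof (intro exI conjI)
  show "strict_mono (id :: nat \<Rightarrow> nat)" by (simp add: strict_mono_def)
  have Aid: "A id f = f" by (simp add: fun_eq_iff A_push push_id)
  show "qsym (A id f)" unfolding Aid qsym_def
    using eq_comp[OF assms(2)] by metis
qed

end
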